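(* Let $\mathcal{G}=(G;T_1,T_2;\theta)$ and $\mathcal{G}'=(G';T_1',T_2';\theta')$ be symmetric $2$-tree decompositions such that $\mathcal{G}'$ is obtained from $\mathcal{G}$ by a symmetric $2$-tree $0$-extension. If $\mathcal{G}$ has a $\mathcal{C}_s$-realisation $(p,\tau)$ in the plane, then $\mathcal{G}'$ has a $\mathcal{C}_s$-realisation $(p',\tau)$ in the plane with $p'(w)=p(w)$ for all $w\in V(G)$.
   Context: A multi-graph is finite and loop-free, possibly with parallel edges. A $2$-tree decomposition is $(G;T_1,T_2)$ with $G$ a multi-graph and $T_1,T_2$ spanning trees of $G$ whose edge sets partition $E(G)$. Let $\mathbb{Z}_2=\langle s\rangle$. A $\mathbb{Z}_2$-symmetric multi-graph is $(G,\theta)$ with $\theta:\mathbb{Z}_2\to\mathrm{Aut}(G)$ a non-trivial homomorphism; $s_\theta=\theta(s)$, $s_\theta(v_1v_2)=s_\theta(v_1)s_\theta(v_2)$. A symmetric $2$-tree decomposition is $(G;T_1,T_2;\theta)$ with $(G;T_1,T_2)$ a $2$-tree decomposition, $(G,\theta)$ $\mathbb{Z}_2$-symmetric and $s_\theta(T_i)=T_i$. A symmetric $2$-tree $0$-extension produces $(G';T_1',T_2';\theta')$ from $(G;T_1,T_2;\theta)$ by adding two new distinct vertices $v,s_{\theta'}(v)$ with $s_{\theta'}|_{V(G)}=s_\theta$, adding an edge $vv_1$ to $T_1$ and an edge $vv_2$ to $T_2$ for some (not necessarily distinct) $v_1,v_2\in V(G)$, and adding their images $s_{\theta'}(vv_1)$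 to $T_1$ and $s_{\theta'}(vv_2)$ to $T_2$. Realisations: a framework $(G,p)$ in $\mathbb{R}^d$ is a multi-graph $G$ with an injective $p:V(G)\to\mathbb{R}^d$; $\|x\|_\infty=\max_i|x\cdot e_i|$. If $u,w$ are joined by exactly $t\ge1$ edges, $\{p(u),p(w)\}$ is well-positioned if there are exactly $t$ distinct indices $k$ with $\|p(u)-p(w)\|_\infty=|(p(u)-p(w))\cdot e_k|$ (its framework colours); $(G,p)$ is well-positioned if all adjacent pairs are; a framework colouring $\kappa_p$ assigns to the $t$ edges between $u,w$ these $t$ colours bijectively. A realisation of $(G;T_1,\dots,T_d)$ is a well-positioned $(G,p)$ in $\mathbb{R}^d$ with $\kappa_p^{-1}(i)=E(T_i)$ for all $i$, for some framework colouring. A $\mathcal{C}_s$-realisation of a symmetric $2$-tree decomposition $(G;T_1,T_2;\theta)$ is a pair $(p,\tau)$ where $p:V(G)\to\mathbb{R}^2$ is injective, $\tau:\mathbb{Z}_2\to GL(\mathbb{R}^2)$ is a representation with $\tau(s)$ a reflection in a coordinate axis, $\tau(s)(p(v))=p(s_\theta(v))$ for all $v$, and $(G,p)$ is a realisation of $(G;T_1,T_2)$. *)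

theory Defs
  imports "HOL-Analysis.Analysis"
begin

text \<open>A multigraph: vertex set, edge set, and an incidence map sending each edge
  to the (two-element) set of its end vertices.  Parallel edges are distinct edges
  with the same ends.\<close>

record ('v, 'e) mgraph =
  verts :: "'v set"
  edges :: "'e set"
  ends  :: "'e \<Rightarrow> 'v set"

definition multigraph :: "('v, 'e) mgraph \<Rightarrow> bool" where
  "multigraph G \<longleftrightarrow> finite (verts G) \<and> finite (edges G) \<and>
     (\<forall>e\<in>edges G. \<exists>u w. u \<in> verts G \<and> w \<in> verts G \<and> u \<noteq> w \<and> ends G e = {u, w})"

definition is_walk :: "('v, 'e) mgraph \<Rightarrow> 'e set \<Rightarrow> 'v list \<Rightarrow> 'e list \<Rightarrow> bool" where
  "is_walk G F vs es \<longleftrightarrow> length vs = Suc (length es) \<and> set vs \<subseteq> verts G \<and> set es \<subseteq> F \<and>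
     (\<forall>i<length es. ends G (es ! i) = {vs ! i, vs ! Suc i})"

text \<open>Cycle: closed walk of length at least one with pairwise distinct edges and
  pairwise distinct vertices v_1,...,v_k (v_k = v_0).  Two parallel edges form a cycle.\<close>
definition is_cycle :: "('v, 'e) mgraph \<Rightarrow> 'e set \<Rightarrow> 'v list \<Rightarrow> 'e list \<Rightarrow> bool" where
  "is_cycle G F vs es \<longleftrightarrow> is_walk G F vs es \<and> es \<noteq> [] \<and> distinct es \<and>
     hd vs = last vs \<and> distinct (tl vs)"

definition spanning_tree :: "('v, 'e) mgraph \<Rightarrow> 'e set \<Rightarrow> bool" where
  "spanning_tree G F \<longleftrightarrow> F \<subseteq> edges G \<and>
     (\<forall>u\<in>verts G. \<forall>w\<in>verts G. \<exists>vs es. is_walk G F vs es \<and> hd vs = u \<and> last vs = w) \<and>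
     \<not> (\<exists>vs es. is_cycle G F vs es)"

definition two_tree_decomp :: "('v, 'e) mgraph \<Rightarrow> 'e set \<Rightarrow> 'e set \<Rightarrow> bool" where
  "two_tree_decomp G T1 T2 \<longleftrightarrow> multigraph G \<and> spanning_tree G T1 \<and> spanning_tree G T2 \<and>
     T1 \<inter> T2 = {} \<and> T1 \<union> T2 = edges G"

definition graph_aut :: "('v, 'e) mgraph \<Rightarrow> ('v \<Rightarrow> 'v) \<Rightarrow> ('e \<Rightarrow> 'e) \<Rightarrow> bool" where
  "graph_aut G sv se \<longleftrightarrow> bij_betw sv (verts G) (verts G) \<and> bij_betw se (edges G) (edges G) \<and>
     (\<forall>e\<in>edges G. ends G (se e) = sv ` ends G e)"

text \<open>A non-trivial homomorphism theta : Z2 = <s> \<rightarrow> Aut(G) is determined by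
  s_theta = theta(s) = (sv, se), an automorphism with s_theta^2 = id and s_theta \<noteq> id.\<close>
definition Z2_symmetric :: "('v, 'e) mgraph \<Rightarrow> ('v \<Rightarrow> 'v) \<Rightarrow> ('e \<Rightarrow> 'e) \<Rightarrow> bool" where
  "Z2_symmetric G sv se \<longleftrightarrow> multigraph G \<and> graph_aut G sv se \<and>
     (\<forall>v\<in>verts G. sv (sv v) = v) \<and> (\<forall>e\<in>edges G. se (se e) = e) \<and>
     \<not> ((\<forall>v\<in>verts G. sv v = v) \<and> (\<forall>e\<in>edges G. se e = e))"

definition sym_two_tree_decomp ::
  "('v, 'e) mgraph \<Rightarrow> 'e set \<Rightarrow> 'e set \<Rightarrow> ('v \<Rightarrow> 'v) \<Rightarrow> ('e \<Rightarrow> 'e) \<Rightarrow> bool" where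
  "sym_two_tree_decomp G T1 T2 sv se \<longleftrightarrow> two_tree_decomp G T1 T2 \<and> Z2_symmetric G sv se \<and>
     se ` T1 = T1 \<and> se ` T2 = T2"

definition sym_0_extension ::
  "('v, 'e) mgraph \<Rightarrow> 'e set \<Rightarrow> 'e set \<Rightarrow> ('v \<Rightarrow> 'v) \<Rightarrow> ('e \<Rightarrow> 'e) \<Rightarrow>
   ('v, 'e) mgraph \<Rightarrow> 'e set \<Rightarrow> 'e set \<Rightarrow> ('v \<Rightarrow> 'v) \<Rightarrow> ('e \<Rightarrow> 'e) \<Rightarrow> bool" where
  "sym_0_extension G T1 T2 sv se G' T1' T2' sv' se' \<longleftrightarrow>
     (\<exists>v v1 v2 a b.
        v \<notin> verts G \<and> sv' v \<notin> verts G \<and> v \<noteq> sv' v \<and>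
        v1 \<in> verts G \<and> v2 \<in> verts G \<and>
        verts G' = verts G \<union> {v, sv' v} \<and>
        (\<forall>w\<in>verts G. sv' w = sv w) \<and>
        a \<notin> edges G \<and> b \<notin> edges G \<and> a \<noteq> b \<and>
        edges G' = edges G \<union> {a, b, se' a, se' b} \<and>
        (\<forall>e\<in>edges G. ends G' e = ends G e) \<and>
        ends G' a = {v, v1} \<and> ends G' b = {v, v2} \<and>
        T1' = T1 \<union> {a, se' a} \<and> T2' = T2 \<union> {b, se' b})"

definition parallel_edges :: "('v, 'e) mgraph \<Rightarrow> 'v \<Rightarrow> 'v \<Rightarrow> 'e set" where
  "parallel_edges G u w = {e \<in> edges G. ends G e = {u, w}}"

definition framework_colours :: "('v \<Rightarrow> real^2) \<Rightarrow> 'v \<Rightarrow> 'v \<Rightarrow> 2 set" where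
  "framework_colours p u w = {k. infnorm (p u - p w) = \<bar>(p u - p w) $ k\<bar>}"

definition well_positioned :: "('v, 'e) mgraph \<Rightarrow> ('v \<Rightarrow> real^2) \<Rightarrow> bool" where
  "well_positioned G p \<longleftrightarrow> (\<forall>u\<in>verts G. \<forall>w\<in>verts G. parallel_edges G u w \<noteq> {} \<longrightarrow>
      card (framework_colours p u w) = card (parallel_edges G u w))"

definition framework_colouring :: "('v, 'e) mgraph \<Rightarrow> ('v \<Rightarrow> real^2) \<Rightarrow> ('e \<Rightarrow> 2) \<Rightarrow> bool" where
  "framework_colouring G p \<kappa> \<longleftrightarrow> (\<forall>u\<in>verts G. \<forall>w\<in>verts G. parallel_edges G u w \<noteq> {} \<longrightarrow>
      bij_betw \<kappa> (parallel_edges G u w) (framework_colours p u w))"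

definition realisation :: "('v, 'e) mgraph \<Rightarrow> 'e set \<Rightarrow> 'e set \<Rightarrow> ('v \<Rightarrow> real^2) \<Rightarrow> bool" where
  "realisation G T1 T2 p \<longleftrightarrow> inj_on p (verts G) \<and> well_positioned G p \<and>
     (\<exists>\<kappa>. framework_colouring G p \<kappa> \<and>
        {e \<in> edges G. \<kappa> e = 1} = T1 \<and> {e \<in> edges G. \<kappa> e = 2} = T2)"

text \<open>tau(s) is a reflection in a coordinate axis (negates one coordinate).  Since
  such a map is an involution in GL(R^2), it determines the representation tau.\<close>
definition coord_reflection :: "(real^2 \<Rightarrow> real^2) \<Rightarrow> bool" where
  "coord_reflection t \<longleftrightarrow> (\<exists>k::2. t = (\<lambda>x. \<chi> i. if i = k then - (x $ i) else x $ i))"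

definition Cs_realisation ::
  "('v, 'e) mgraph \<Rightarrow> 'e set \<Rightarrow> 'e set \<Rightarrow> ('v \<Rightarrow> 'v) \<Rightarrow> ('v \<Rightarrow> real^2) \<Rightarrow> (real^2 \<Rightarrow> real^2) \<Rightarrow> bool" where
  "Cs_realisation G T1 T2 sv p t \<longleftrightarrow> inj_on p (verts G) \<and> coord_reflection t \<and>
     (\<forall>v\<in>verts G. t (p v) = p (sv v)) \<and> realisation G T1 T2 p"

end

theory Submission imports Defs begin

lemma infnorm2: fixes x :: "real^2" shows "infnorm x = max \<bar>x$1\<bar> \<bar>x$2\<bar>"
  unfolding infnorm_cart UNIV_2 by (rule cSup_eq) auto

definition col :: "real^2 \<Rightarrow> 2 set" where "col d = {k. infnorm d = \<bar>d $ k\<bar>}"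

lemma col1: "\<bar>d$2\<bar> < \<bar>d$1\<bar> \<Longrightarrow> col d = {1}"
  unfolding col_def infnorm2 by (auto simp: max_def) (metis exhaust_2 less_irrefl)
lemma col2: "\<bar>d$1\<bar> < \<bar>d$2\<bar> \<Longrightarrow> col d = {2}"
  unfolding col_def infnorm2 by (auto simp: max_def) (metis exhaust_2 less_irrefl)
lemma col12: "\<bar>d$1\<bar> = \<bar>d$2\<bar> \<Longrightarrow> col d = {1,2}"
  unfolding col_def infnorm2 using exhaust_2 by (auto simp: max_def)

lemma col_neg: "col (-d) = col d"
  unfolding col_def by (simp add: infnorm_neg)

lemma col_swap: "col (x - y) = col (y - x)"
  by (metis col_neg minus_diff_eq)

lemma col_pair: assumes "{u, w} = {x, y}" shows "col (f u - f w) = col (f x - f y)"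
proof -
  have "(u = x \<and> w = y) \<or> (u = y \<and> w = x)" using assms[unfolded doubleton_eq_iff] .
  then show ?thesis
  proof
    assume "u = x \<and> w = y" then show ?thesis by simp
  next
    assume "u = y \<and> w = x" then show ?thesis using col_swap[of "f y" "f x"] by simp
  qed
qed

lemma filt4: "{e \<in> {a, b, c, d}. f e = X} = (if f a = X then {a} else {}) \<union>
   (if f b = X then {b} else {}) \<union> (if f c = X then {c} else {}) \<union> (if f d = X then {d} else {})"
  by auto

lemma filt_ne: "{e \<in> A. P e} \<noteq> {} \<Longrightarrow> \<exists>e\<in>A. P e"
  by auto

lemma fc_col: "framework_colours p u w = col (p u - p w)"
  unfolding framework_colours_def col_def ..

lemma refl_nth: assumes "coord_reflection t"
  obtains k where "\<And>x i. t x $ i = (if i = k then - (x $ i) else x $ i)"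
proof -
  from assms obtain k where k: "t = (\<lambda>x. \<chi> i. if i = k then - (x $ i) else x $ i)"
    unfolding coord_reflection_def by blast
  have "\<And>x i. t x $ i = (if i = k then - (x $ i) else x $ i)" unfolding k by simp
  then show ?thesis by (rule that)
qed

lemma refl_comp: assumes "coord_reflection t" shows "\<bar>t x $ i\<bar> = \<bar>x $ i\<bar>"
proof -
  obtain k where k: "\<And>x i. t x $ i = (if i = k then - (x $ i) else x $ i)" using refl_nth[OF assms] by blast
  show ?thesis unfolding k by simp
qed
lemma refl_comp2: assumes "coord_reflection t" shows "t x $ i = x $ i \<or> t x $ i = - x $ i"
proof -
  obtain k where k: "\<And>x i. t x $ i = (if i = k then - (x $ i) else x $ i)" using refl_nth[OF assms] by blast
  show ?thesis unfolding k by simp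
qed
lemma refl_diff: assumes "coord_reflection t" shows "t (x - y) = t x - t y"
proof -
  obtain k where k: "\<And>x i. t x $ i = (if i = k then - (x $ i) else x $ i)" using refl_nth[OF assms] by blast
  show ?thesis by (simp add: vec_eq_iff k)
qed
lemma refl_inv: assumes "coord_reflection t" shows "t (t x) = x"
proof -
  obtain k where k: "\<And>x i. t x $ i = (if i = k then - (x $ i) else x $ i)" using refl_nth[OF assms] by blast
  show ?thesis by (simp add: vec_eq_iff k)
qed
lemma refl_fix: assumes "coord_reflection t" "x$1 \<noteq> 0" "x$2 \<noteq> 0" shows "t x \<noteq> x"
proof
  assume h: "t x = x"
  obtain k where k: "\<And>x i. t x $ i = (if i = k then - (x $ i) else x $ i)" using refl_nth[OF assms(1)] by blast
  have "t x $ k = x $ k" using h by simp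
  then have "x $ k = 0" unfolding k by simp
  then show False using assms(2,3) exhaust_2[of k] by auto
qed
lemma col_refl: "coord_reflection t \<Longrightarrow> col (t d) = col d"
  unfolding col_def infnorm2 by (simp add: refl_comp)

lemma avoid: fixes F :: "real set" assumes "finite F" "lo < hi" shows "\<exists>s. lo < s \<and> s < hi \<and> s \<notin> F"
proof -
  have "infinite {lo<..<hi}" using assms(2) by simp
  then have "\<not> {lo<..<hi} \<subseteq> F" using assms(1) finite_subset by blast
  then show ?thesis by auto
qed

lemma choose_eq:
  fixes P1 :: "real^2" and F1 F2 :: "real set"
  assumes "finite F1" "finite F2"
  shows "\<exists>q. q$1 \<notin> F1 \<and> q$2 \<notin> F2 \<and> col (q - P1) = {1,2}"
proof -
  obtain s where s: "0 < s" "s < 1" "s \<notin> (\<lambda>z. z - P1$1) ` F1 \<union> (\<lambda>z. z - P1$2) ` F2"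
    using avoid[of "(\<lambda>z. z - P1$1) ` F1 \<union> (\<lambda>z. z - P1$2) ` F2" 0 1] assms by auto
  define q :: "real^2" where "q = (\<chi> i. P1$i + s)"
  have "q$1 \<notin> F1" using s(3) unfolding q_def by (auto simp: image_iff)
  moreover have "q$2 \<notin> F2" using s(3) unfolding q_def by (auto simp: image_iff)
  moreover have "col (q - P1) = {1,2}" by (rule col12) (simp add: q_def)
  ultimately show ?thesis by blast
qed

lemma choose_XY: fixes a b :: real assumes "a \<noteq> 0 \<or> b \<noteq> 0"
  shows "\<exists>X Y. \<bar>Y\<bar> < \<bar>X\<bar> \<and> \<bar>X - a\<bar> < \<bar>Y - b\<bar>"
proof (cases "a = 0")
  case True
  then have b: "\<bar>b\<bar> > 0" using assms by simp
  have "\<bar>0::real\<bar> < \<bar>b/2\<bar>" using b by simp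
  moreover have "\<bar>b/2 - a\<bar> < \<bar>0 - b\<bar>" using b True by simp
  ultimately show ?thesis by blast
next
  case False
  then have a: "\<bar>a\<bar> > 0" by simp
  show ?thesis
  proof (cases "b = 0")
    case True
    have "\<bar>a/2\<bar> < \<bar>a\<bar>" using a by simp
    moreover have "\<bar>a - a\<bar> < \<bar>a/2 - b\<bar>" using a True by simp
    ultimately show ?thesis by blast
  next
    case b: False
    have "\<bar>0::real\<bar> < \<bar>a\<bar>" using a by simp
    moreover have "\<bar>a - a\<bar> < \<bar>0 - b\<bar>" using b by simp
    ultimately show ?thesis by blast
  qed
qed

lemma choose_neq:
  fixes P1 P2 :: "real^2" and F1 F2 :: "real set"
  assumes "finite F1" "finite F2" "P1 \<noteq> P2"
  shows "\<exists>q. q$1 \<notin> F1 \<and> q$2 \<notin> F2 \<and> col (q - P1) = {1} \<and> col (q - P2) = {2}"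
proof -
  define a where "a = P2$1 - P1$1"
  define b where "b = P2$2 - P1$2"
  have ab: "a \<noteq> 0 \<or> b \<noteq> 0"
  proof (rule ccontr)
    assume "\<not> (a \<noteq> 0 \<or> b \<noteq> 0)"
    then have "P1 $ 1 = P2 $ 1" "P1 $ 2 = P2 $ 2" unfolding a_def b_def by simp_all
    then have "P1 $ i = P2 $ i" for i using exhaust_2[of i] by auto
    then have "P1 = P2" by (simp add: vec_eq_iff)
    then show False using assms(3) by contradiction
  qed
  obtain X Y where XY: "\<bar>Y\<bar> < \<bar>X\<bar>" "\<bar>X - a\<bar> < \<bar>Y - b\<bar>" using choose_XY[OF ab] by blast
  define r where "r = min (\<bar>X\<bar> - \<bar>Y\<bar>) (\<bar>Y - b\<bar> - \<bar>X - a\<bar>) / 2"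
  have r: "r > 0" using XY unfolding r_def by simp
  have r1: "2 * r \<le> \<bar>X\<bar> - \<bar>Y\<bar>" and r2: "2 * r \<le> \<bar>Y - b\<bar> - \<bar>X - a\<bar>" unfolding r_def by simp_all
  have lr: "- r < r" using r by simp
  obtain s1 where s1: "-r < s1" "s1 < r" "s1 \<notin> (\<lambda>z. z - P1$1 - X) ` F1"
    using avoid[OF finite_imageI[OF assms(1)] lr] by blast
  obtain s2 where s2: "-r < s2" "s2 < r" "s2 \<notin> (\<lambda>z. z - P1$2 - Y) ` F2"
    using avoid[OF finite_imageI[OF assms(2)] lr] by blast
  define q :: "real^2" where "q = (\<chi> i. if i = 1 then P1$1 + X + s1 else P1$2 + Y + s2)"
  have q1: "q$1 = P1$1 + X + s1" and q2: "q$2 = P1$2 + Y + s2" unfolding q_def by simp_all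
  have "q$1 \<notin> F1"
  proof
    assume "q$1 \<in> F1"
    then have "s1 \<in> (\<lambda>z. z - P1$1 - X) ` F1" by (rule rev_image_eqI) (simp add: q1)
    then show False using s1(3) by contradiction
  qed
  moreover have "q$2 \<notin> F2"
  proof
    assume "q$2 \<in> F2"
    then have "s2 \<in> (\<lambda>z. z - P1$2 - Y) ` F2" by (rule rev_image_eqI) (simp add: q2)
    then show False using s2(3) by contradiction
  qed
  moreover have as: "\<bar>s1\<bar> < r" "\<bar>s2\<bar> < r" using s1(1,2) s2(1,2) by linarith+
  moreover have "col (q - P1) = {1}"
  proof (rule col1)
    have t1: "\<bar>Y + s2\<bar> \<le> \<bar>Y\<bar> + \<bar>s2\<bar>" by (rule abs_triangle_ineq)
    have t2: "\<bar>X\<bar> \<le> \<bar>X + s1\<bar> + \<bar>s1\<bar>" using abs_triangle_ineq[of "X + s1" "- s1"] by simp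
    have "\<bar>Y + s2\<bar> < \<bar>X + s1\<bar>" using as r1 t1 t2 by linarith
    moreover have "(q - P1)$2 = Y + s2" "(q - P1)$1 = X + s1" by (simp_all add: q1 q2)
    ultimately show "\<bar>(q - P1)$2\<bar> < \<bar>(q - P1)$1\<bar>" by simp
  qed
  moreover have "col (q - P2) = {2}"
  proof (rule col2)
    have t1: "\<bar>X + s1 - a\<bar> \<le> \<bar>X - a\<bar> + \<bar>s1\<bar>" using abs_triangle_ineq[of "X - a" s1] by simp
    have t2: "\<bar>Y - b\<bar> \<le> \<bar>Y + s2 - b\<bar> + \<bar>s2\<bar>" using abs_triangle_ineq[of "Y + s2 - b" "- s2"] by simp
    have "\<bar>X + s1 - a\<bar> < \<bar>Y + s2 - b\<bar>" using as r2 t1 t2 by linarith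
    moreover have "(q - P2)$1 = X + s1 - a" "(q - P2)$2 = Y + s2 - b"
      by (simp_all add: q1 q2 a_def b_def)
    ultimately show "\<bar>(q - P2)$1\<bar> < \<bar>(q - P2)$2\<bar>" by simp
  qed
  ultimately show ?thesis by blast
qed

theorem proposition5p8:
  fixes G G' :: "('v, 'e) mgraph" and T1 T2 T1' T2' :: "'e set"
    and sv sv' :: "'v \<Rightarrow> 'v" and se se' :: "'e \<Rightarrow> 'e"
    and p :: "'v \<Rightarrow> real^2" and t :: "real^2 \<Rightarrow> real^2"
  assumes "sym_two_tree_decomp G T1 T2 sv se"
    and "sym_two_tree_decomp G' T1' T2' sv' se'"
    and "sym_0_extension G T1 T2 sv se G' T1' T2' sv' se'"
    and "Cs_realisation G T1 T2 sv p t"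
  shows "\<exists>p'. Cs_realisation G' T1' T2' sv' p' t \<and> (\<forall>w\<in>verts G. p' w = p w)"
proof -
  from assms(3) obtain v v1 v2 a b where
    vG: "v \<notin> verts G" and svG: "sv' v \<notin> verts G" and vsv: "v \<noteq> sv' v"
    and v1: "v1 \<in> verts G" and v2: "v2 \<in> verts G"
    and VG': "verts G' = verts G \<union> {v, sv' v}" and svsv: "\<forall>w\<in>verts G. sv' w = sv w"
    and aG: "a \<notin> edges G" and bG: "b \<notin> edges G" and ab: "a \<noteq> b"
    and EG': "edges G' = edges G \<union> {a, b, se' a, se' b}"
    and endsold: "\<forall>e\<in>edges G. ends G' e = ends G e"
    and enda: "ends G' a = {v, v1}" and endb: "ends G' b = {v, v2}"
    and T1': "T1' = T1 \<union> {a, se' a}" and T2': "T2' = T2 \<union> {b, se' b}"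
    unfolding sym_0_extension_def by blast
  from assms(1) have mG: "multigraph G" and autG: "graph_aut G sv se"
    unfolding sym_two_tree_decomp_def two_tree_decomp_def Z2_symmetric_def by auto
  from assms(2) have disj': "T1' \<inter> T2' = {}" and autG': "graph_aut G' sv' se'"
    and inv': "\<forall>w\<in>verts G'. sv' (sv' w) = w"
    unfolding sym_two_tree_decomp_def two_tree_decomp_def Z2_symmetric_def by auto
  from assms(4) have injp: "inj_on p (verts G)" and ct: "coord_reflection t"
    and tp: "\<forall>w\<in>verts G. t (p w) = p (sv w)" and rG: "realisation G T1 T2 p"
    unfolding Cs_realisation_def by auto
  from rG obtain \<kappa> where kc: "framework_colouring G p \<kappa>"
    and k1: "{e \<in> edges G. \<kappa> e = 1} = T1" and k2: "{e \<in> edges G. \<kappa> e = 2} = T2"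
    unfolding realisation_def by blast
  have oldends: "\<And>e. e \<in> edges G \<Longrightarrow> ends G' e \<subseteq> verts G"
    using mG endsold unfolding multigraph_def by fastforce
  have bijsv: "bij_betw sv (verts G) (verts G)" using autG unfolding graph_aut_def by auto
  then have injsv: "inj_on sv (verts G)" and sv1: "sv v1 \<in> verts G" and sv2: "sv v2 \<in> verts G"
    using v1 v2 bij_betw_imp_inj_on bij_betwE by blast+
  have aG': "a \<in> edges G'" and bG': "b \<in> edges G'" using EG' by auto
  have sa_ends: "ends G' (se' a) = {sv' v, sv v1}"
    using autG' aG' enda svsv v1 unfolding graph_aut_def by auto
  have sb_ends: "ends G' (se' b) = {sv' v, sv v2}"
    using autG' bG' endb svsv v2 unfolding graph_aut_def by auto
  have d1: "a \<noteq> se' b" "se' a \<noteq> b" "se' a \<noteq> se' b"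
    using disj' T1' T2' by blast+
  have saG: "se' a \<notin> edges G" using oldends[of "se' a"] sa_ends svG by auto
  have sbG: "se' b \<notin> edges G" using oldends[of "se' b"] sb_ends svG by auto
  have nv: "v \<noteq> v1" "v \<noteq> v2" "sv' v \<noteq> v1" "sv' v \<noteq> v2" "sv' v \<noteq> sv v1" "sv' v \<noteq> sv v2"
    "v \<noteq> sv v1" "v \<noteq> sv v2"
    using vG svG v1 v2 sv1 sv2 by auto
  have NE: "{sv' v, sv v1} \<noteq> {v, v1}" "{sv' v, sv v2} \<noteq> {v, v1}"
    "{sv' v, sv v1} \<noteq> {v, v2}" "{sv' v, sv v2} \<noteq> {v, v2}"
    "{v, v1} \<noteq> {sv' v, sv v1}" "{v, v1} \<noteq> {sv' v, sv v2}"
    "{v, v2} \<noteq> {sv' v, sv v1}" "{v, v2} \<noteq> {sv' v, sv v2}"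
    using vsv svG v1 v2 by (auto simp: doubleton_eq_iff)
  have svinj: "sv v1 = sv v2 \<longleftrightarrow> v1 = v2" using injsv v1 v2 by (meson inj_onD)
  have N1: "{sv' v, x} \<noteq> {v, y}" if "y \<in> verts G" for x y
  proof
    assume h: "{sv' v, x} = {v, y}"
    have "sv' v \<in> {v, y}" using h by blast
    then show False using that vsv svG by auto
  qed
  have N2: "\<And>x y. y \<in> verts G \<Longrightarrow> {v, y} \<noteq> {sv' v, x}" using N1 by metis
  have E1: "{v, v2} = {v, v1} \<longleftrightarrow> v1 = v2" "{v, v1} = {v, v2} \<longleftrightarrow> v1 = v2"
    using nv by (auto simp: doubleton_eq_iff)
  have E2: "{sv' v, sv v2} = {sv' v, sv v1} \<longleftrightarrow> v1 = v2" "{sv' v, sv v1} = {sv' v, sv v2} \<longleftrightarrow> v1 = v2"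
    using nv svinj by (auto simp: doubleton_eq_iff)
  define F1 where "F1 = {0} \<union> (\<lambda>w. (p w)$1) ` verts G \<union> (\<lambda>w. - (p w)$1) ` verts G"
  define F2 where "F2 = {0} \<union> (\<lambda>w. (p w)$2) ` verts G \<union> (\<lambda>w. - (p w)$2) ` verts G"
  have fin: "finite F1" "finite F2" using mG unfolding F1_def F2_def multigraph_def by auto
  obtain q where qF: "q$1 \<notin> F1" "q$2 \<notin> F2"
    and C1: "col (q - p v1) = (if v1 = v2 then {1,2} else {1})"
    and C2: "v1 \<noteq> v2 \<Longrightarrow> col (q - p v2) = {2}"
  proof (cases "v1 = v2")
    case True
    then show ?thesis using choose_eq[OF fin, of "p v1"] that by auto
  next
    case False
    then have pp: "p v1 \<noteq> p v2" using injp v1 v2 by (meson inj_onD)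
    show ?thesis using choose_neq[OF fin pp] that False by auto
  qed
  have q1: "q$1 \<noteq> 0" and q2: "q$2 \<noteq> 0" using qF unfolding F1_def F2_def by auto
  have qnot: "q \<notin> p ` verts G"
  proof
    assume "q \<in> p ` verts G"
    then obtain w where "w \<in> verts G" "q = p w" by auto
    then show False using qF(1) unfolding F1_def by auto
  qed
  have tqnot: "t q \<notin> p ` verts G"
  proof
    assume "t q \<in> p ` verts G"
    then obtain w where w: "w \<in> verts G" "t q = p w" by auto
    then have "q$1 = (p w)$1 \<or> q$1 = - (p w)$1" using refl_comp2[OF ct, of q 1] by auto
    then show False using qF(1) w(1) unfolding F1_def by auto
  qed
  have tqq: "t q \<noteq> q" using refl_fix[OF ct q1 q2] .
  define p' where "p' = p(v := q, sv' v := t q)"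
  have p'old: "\<And>w. w \<in> verts G \<Longrightarrow> p' w = p w" unfolding p'_def using vG svG by auto
  have p'v: "p' v = q" and p'sv: "p' (sv' v) = t q" unfolding p'_def using vsv by auto
  have img: "p' ` verts G = p ` verts G" using p'old by (simp cong: image_cong)
  have injp': "inj_on p' (verts G')"
  proof -
    have i0: "inj_on p' (verts G)" using injp p'old by (simp add: inj_on_def)
    have i1: "inj_on p' (insert (sv' v) (verts G))"
      using i0 svG tqnot by (simp add: p'sv img)
    have "p' ` (insert (sv' v) (verts G) - {v}) \<subseteq> insert (t q) (p ` verts G)"
      using p'sv img by auto
    then have i2: "inj_on p' (insert v (insert (sv' v) (verts G)))"
      using i1 qnot tqq by (auto simp: p'v)
    show ?thesis using i2 VG' by (simp add: insert_commute)
  qed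
  have symm: "\<forall>w\<in>verts G'. t (p' w) = p' (sv' w)"
  proof
    fix w assume w: "w \<in> verts G'"
    show "t (p' w) = p' (sv' w)"
    proof (cases "w \<in> verts G")
      case True
      then have "sv w \<in> verts G" using bijsv bij_betwE by blast
      then show ?thesis using True tp svsv p'old by auto
    next
      case False
      then have "w = v \<or> w = sv' v" using w VG' by auto
      moreover have "sv' (sv' v) = v" using inv' VG' by auto
      ultimately show ?thesis using p'v p'sv refl_inv[OF ct] by auto
    qed
  qed
  define \<kappa>' where "\<kappa>' = (\<lambda>e. if e = a \<or> e = se' a then (1::2) else if e = b \<or> e = se' b then 2 else \<kappa> e)"
  have kold: "\<And>e. e \<in> edges G \<Longrightarrow> \<kappa>' e = \<kappa> e"
    unfolding \<kappa>'_def using aG bG saG sbG by auto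
  have ka: "\<kappa>' a = 1" "\<kappa>' (se' a) = 1" and kb: "\<kappa>' b = 2" "\<kappa>' (se' b) = 2"
    unfolding \<kappa>'_def using ab d1 by auto
  have fcp': "\<And>u w. framework_colours p' u w = col (p' u - p' w)" by (rule fc_col)
  have colsa: "col (t q - p (sv v1)) = col (q - p v1)"
    using tp v1 refl_diff[OF ct, of q "p v1"] col_refl[OF ct, of "q - p v1"] by simp
  have colsb: "col (t q - p (sv v2)) = col (q - p v2)"
    using tp v2 refl_diff[OF ct, of q "p v2"] col_refl[OF ct, of "q - p v2"] by simp
  have fcol: "framework_colouring G' p' \<kappa>'"
    unfolding framework_colouring_def
  proof (intro ballI impI)
    fix u w assume u: "u \<in> verts G'" and w: "w \<in> verts G'" and ne: "parallel_edges G' u w \<noteq> {}"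
    show "bij_betw \<kappa>' (parallel_edges G' u w) (framework_colours p' u w)"
    proof (cases "u \<in> verts G \<and> w \<in> verts G")
      case True
      have pe: "parallel_edges G' u w = parallel_edges G u w"
        unfolding parallel_edges_def using True endsold EG' enda endb sa_ends sb_ends vG svG
        by auto
      have fc: "framework_colours p' u w = framework_colours p u w"
        unfolding framework_colours_def using True p'old by simp
      have "parallel_edges G u w \<noteq> {}" using ne pe by simp
      then have "bij_betw \<kappa> (parallel_edges G u w) (framework_colours p u w)"
        using kc True unfolding framework_colouring_def by blast
      moreover have "\<And>e. e \<in> parallel_edges G u w \<Longrightarrow> \<kappa>' e = \<kappa> e"
        using kold unfolding parallel_edges_def by auto
      ultimately show ?thesis using pe fc bij_betw_cong by metis
    next
      case False
      have notold: "e \<notin> edges G" if "ends G' e = {u, w}" for e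
      proof
        assume "e \<in> edges G"
        then have "{u, w} \<subseteq> verts G" using oldends[of e] that by simp
        then show False using False by simp
      qed
      have pe0: "parallel_edges G' u w = {e \<in> {a, b, se' a, se' b}. ends G' e = {u, w}}"
        unfolding parallel_edges_def EG' using notold by blast
      have pe: "parallel_edges G' u w = (if ends G' a = {u, w} then {a} else {}) \<union>
         (if ends G' b = {u, w} then {b} else {}) \<union> (if ends G' (se' a) = {u, w} then {se' a} else {}) \<union>
         (if ends G' (se' b) = {u, w} then {se' b} else {})"
        unfolding pe0 by (rule filt4)
      from filt_ne[OF ne[unfolded pe0]] obtain e where e: "e \<in> {a, b, se' a, se' b}" "ends G' e = {u, w}"
        by (rule bexE)
      have eo: "e = a \<or> e = b \<or> e = se' a \<or> e = se' b" using e(1) by simp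
      have e4: "{u, w} = {v, v1} \<or> {u, w} = {v, v2} \<or> {u, w} = {sv' v, sv v1} \<or> {u, w} = {sv' v, sv v2}"
        using eo
      proof (elim disjE)
        assume "e = a" then show ?thesis using e(2) enda by simp
      next
        assume "e = b" then show ?thesis using e(2) endb by simp
      next
        assume "e = se' a" then show ?thesis using e(2) sa_ends by simp
      next
        assume "e = se' b" then show ?thesis using e(2) sb_ends by simp
      qed
      have ca: "col (p' u - p' w) = col (q - p v1)" if "{u, w} = {v, v1}"
        using col_pair[OF that, of p'] p'v p'old[OF v1] by simp
      have cb: "col (p' u - p' w) = col (q - p v2)" if "{u, w} = {v, v2}"
        using col_pair[OF that, of p'] p'v p'old[OF v2] by simp
      have csa: "col (p' u - p' w) = col (q - p v1)" if "{u, w} = {sv' v, sv v1}"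
        using col_pair[OF that, of p'] p'sv p'old[OF sv1] colsa by simp
      have csb: "col (p' u - p' w) = col (q - p v2)" if "{u, w} = {sv' v, sv v2}"
        using col_pair[OF that, of p'] p'sv p'old[OF sv2] colsb by simp
      have bij12: "bij_betw \<kappa>' {x, y} {1, 2}" if "\<kappa>' x = 1" "\<kappa>' y = 2" for x y
        using that by (auto simp: bij_betw_def inj_on_def)
      have bij1: "bij_betw \<kappa>' {x} {k}" if "\<kappa>' x = k" for x k
        using that by (auto simp: bij_betw_def)
      have HA: ?thesis if 1: "{u, w} = {v, v1}"
      proof (cases "v1 = v2")
        case True
        have "parallel_edges G' u w = {b, a}"
          unfolding pe using 1 enda endb sa_ends sb_ends True NE by simp
        also have "{b, a} = {a, b}" by (rule insert_commute)
        finally have pa: "parallel_edges G' u w = {a, b}" .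
        have "col (q - p v1) = {1, 2}" using C1 True by simp
        then have fc: "framework_colours p' u w = {1, 2}" unfolding fcp' ca[OF 1] .
        show ?thesis unfolding pa fc by (rule bij12[OF ka(1) kb(1)])
      next
        case False
        have pa: "parallel_edges G' u w = {a}"
          unfolding pe using 1 enda endb sa_ends sb_ends E1 E2 False NE by simp
        have "col (q - p v1) = {1}" using C1 False by simp
        then have fc: "framework_colours p' u w = {1}" unfolding fcp' ca[OF 1] .
        show ?thesis unfolding pa fc by (rule bij1[OF ka(1)])
      qed
      have HSA: ?thesis if 1: "{u, w} = {sv' v, sv v1}"
      proof (cases "v1 = v2")
        case True
        have "parallel_edges G' u w = {se' b, se' a}"
          unfolding pe using 1 enda endb sa_ends sb_ends True NE by simp
        also have "{se' b, se' a} = {se' a, se' b}" by (rule insert_commute)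
        finally have pa: "parallel_edges G' u w = {se' a, se' b}" .
        have "col (q - p v1) = {1, 2}" using C1 True by simp
        then have fc: "framework_colours p' u w = {1, 2}" unfolding fcp' csa[OF 1] .
        show ?thesis unfolding pa fc by (rule bij12[OF ka(2) kb(2)])
      next
        case False
        have pa: "parallel_edges G' u w = {se' a}"
          unfolding pe using 1 enda endb sa_ends sb_ends E1 E2 False NE by simp
        have "col (q - p v1) = {1}" using C1 False by simp
        then have fc: "framework_colours p' u w = {1}" unfolding fcp' csa[OF 1] .
        show ?thesis unfolding pa fc by (rule bij1[OF ka(2)])
      qed
      have HB: ?thesis if 1: "{u, w} = {v, v2}"
      proof (cases "v1 = v2")
        case True
        then have "{u, w} = {v, v1}" using 1 by simp
        then show ?thesis by (rule HA)
      next
        case False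
        have pa: "parallel_edges G' u w = {b}"
          unfolding pe using 1 enda endb sa_ends sb_ends E1 E2 False NE by simp
        have "col (q - p v2) = {2}" using C2 False by simp
        then have fc: "framework_colours p' u w = {2}" unfolding fcp' cb[OF 1] .
        show ?thesis unfolding pa fc by (rule bij1[OF kb(1)])
      qed
      have HSB: ?thesis if 1: "{u, w} = {sv' v, sv v2}"
      proof (cases "v1 = v2")
        case True
        then have "{u, w} = {sv' v, sv v1}" using 1 by simp
        then show ?thesis by (rule HSA)
      next
        case False
        have pa: "parallel_edges G' u w = {se' b}"
          unfolding pe using 1 enda endb sa_ends sb_ends E1 E2 False NE by simp
        have "col (q - p v2) = {2}" using C2 False by simp
        then have fc: "framework_colours p' u w = {2}" unfolding fcp' csb[OF 1] .
        show ?thesis unfolding pa fc by (rule bij1[OF kb(2)])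
      qed
      show ?thesis using e4 HA HB HSA HSB by argo
    qed
  qed
  have wp: "well_positioned G' p'"
    unfolding well_positioned_def
  proof (intro ballI impI)
    fix u w assume "u \<in> verts G'" "w \<in> verts G'" "parallel_edges G' u w \<noteq> {}"
    then have "bij_betw \<kappa>' (parallel_edges G' u w) (framework_colours p' u w)"
      using fcol unfolding framework_colouring_def by blast
    then show "card (framework_colours p' u w) = card (parallel_edges G' u w)"
      by (simp add: bij_betw_same_card)
  qed
  have c1: "{e \<in> edges G'. \<kappa>' e = 1} = T1'"
  proof -
    have "{e \<in> edges G'. \<kappa>' e = 1} = {e \<in> edges G. \<kappa> e = 1} \<union> {a, se' a}"
      using EG' kold ka kb by auto
    then show ?thesis using k1 T1' by simp
  qed
  have c2: "{e \<in> edges G'. \<kappa>' e = 2} = T2'"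
  proof -
    have "{e \<in> edges G'. \<kappa>' e = 2} = {e \<in> edges G. \<kappa> e = 2} \<union> {b, se' b}"
      using EG' kold ka kb by auto
    then show ?thesis using k2 T2' by simp
  qed
  have "Cs_realisation G' T1' T2' sv' p' t"
    unfolding Cs_realisation_def realisation_def using injp' ct symm wp fcol c1 c2 by blast
  then show ?thesis using p'old by blast
qed

end
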